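(* Let $N\ge 4$ and let $l,r$ be positive integers with $2\le l+r\le N-2$. Let $\hat O\in V_{\mathcal N}$ be $(l,r)$-invertible. Let $\hat X_i\in V_{\{i\}}$ for $i=1,\dots,N$ be arbitrary. Define operators $\hat Y_k\in V_{\{k+1,\dots,k+r\}}$, $k=N-r,N-r-1,\dots,l$, recursively by $\hat Y_{N-r}=\hat X_{N-r+1}\cdots\hat X_N$ and $$\hat Y_{k-1}=\bar E_{\{k-l,\dots,k-1\}}^{\{k,\dots,k+r-1\}}\Bigl(E_{\{k-l,\dots,k-1\}}^{\{k,\dots,k+r\}}(\hat X_k\hat Y_k)\Bigr),\qquad k=N-r,N-r-1,\dots,l+1,$$ where $\bar E$ denotes the Moore–Penrose pseudoinverse of the linear map $E$. Then $$\mathrm{tr}\bigl[\hat X_1\cdots\hat X_N\,\hat O\bigr]=\mathrm{tr}\bigl[\hat X_1\cdots\hat X_l\,\hat Y_l\,\hat O\bigr].$$ In particular (taking the $\hat X_i$ to run over basis operators $\hat P_i^{(\alpha_i)}$), an $(l,r)$-invertible $\hat O$ is completely determined by its reductions $\mathrm{tr}_{\mathcal N\setminus\{k,\dots,k+R-1\}}[\hat O]$, $k=1,\dots,N-R+1$, to all blocks of $R=l+r+1$ contiguous sites.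
   Context: Consider $N$ sites $\mathcal N=\{1,\dots,N\}$, each carrying $\mathbb C^d$; the total Hilbert space is $(\mathbb C^d)^{\otimes N}$. For each site $i$ let $\{\hat P_i^{(\alpha)}\}_{\alpha=1,\dots,d^2}$ be a basis of the operators on site $i$, orthonormal with respect to the Hilbert–Schmidt inner product $\langle A,B\rangle=\mathrm{tr}[A^\dagger B]$. For $\mathcal I\subset\mathcal N$, $V_{\mathcal I}$ is the complex vector space spanned by the products $\prod_{i\in\mathcal I}\hat P_i^{(\alpha_i)}$ (i.e. the operators acting on the sites in $\mathcal I$), equipped with the Hilbert–Schmidt inner product; an operator in $V_{\mathcal I}$ is identified with its tensor product with the identity on the remaining sites, and products of operators on disjoint site sets are tensor products. $\mathrm{tr}_{\mathcal S}$ denotes the partial trace over the sites in $\mathcal S$. For fixed $\hat O\in V_{\mathcal N}$ and $\mathcal I,\mathcal J\subset\mathcal N$ (with $\mathcal I\cup\mathcal J$ a contiguous set of sites and $\mathcal I\cap\mathcal J=\emptyset$), the linear map $E_{\mathcal I}^{\mathcal J}:V_{\mathcal J}\to V_{\mathcal I}$ is $E_{\mathcal I}^{\mathcal J}(\hat X)=\mathrm{tr}_{\mathcal N\setminus\mathcal I}[\hat X\hat O]$; equivalently $E_{\mathcal I}^{\mathcal J}(\hat X)=\mathrm{tr}_{\mathcal J}[\hat X\hat O_{\mathcal I\cup\mathcal J}]$ with $\hat O_{\mathcal I\cup\mathcal J}=\mathrm{tr}_{\mathcal N\setminus(\mathcal I\cup\mathcal J)}[\hat O]$. Definition ($(l,r)$-invertibility):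 for positive integers $l,r$ with $2\le l+r\le N-2$, $\hat O$ is called $(l,r)$-invertible if for every integer $k$ with $l\le k\le N-r-1$, $$\mathrm{rank}\bigl[E_{\{k-l+1,\dots,k\}}^{\{k+1,\dots,k+r\}}\bigr]=\mathrm{rank}\bigl[E_{\{1,\dots,k\}}^{\{k+1,\dots,N\}}\bigr].$$ *)

theory Defs
  imports Complex_Main "HOL-Library.Function_Algebras"
begin

text \<open>Sites are natural numbers; the chain is the set of sites 1..N, each carrying C^d.
  A basis configuration of a site set S is a function s :: nat => nat with s i < d on S
  and s i = 0 off S.  An operator on S is a matrix indexed by configurations of S,
  i.e. a function cfg => cfg => complex that vanishes off (cfgs d S) x (cfgs d S).\<close>

type_synonym cfg = "nat \<Rightarrow> nat"
type_synonym op = "cfg \<Rightarrow> cfg \<Rightarrow> complex"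

definition cfgs :: "nat \<Rightarrow> nat set \<Rightarrow> cfg set" where
  "cfgs d S = {s. (\<forall>i\<in>S. s i < d) \<and> (\<forall>i. i \<notin> S \<longrightarrow> s i = 0)}"

definition opsp :: "nat \<Rightarrow> nat set \<Rightarrow> op set" where
  "opsp d S = {A. \<forall>s t. s \<notin> cfgs d S \<or> t \<notin> cfgs d S \<longrightarrow> A s t = 0}"

definition opscale :: "complex \<Rightarrow> op \<Rightarrow> op" where
  "opscale c A = (\<lambda>s t. c * A s t)"

definition restr :: "nat set \<Rightarrow> cfg \<Rightarrow> cfg" where
  "restr S s = (\<lambda>i. if i \<in> S then s i else 0)"

definition glue :: "nat set \<Rightarrow> cfg \<Rightarrow> cfg \<Rightarrow> cfg" where
  "glue T u s = (\<lambda>i. if i \<in> T then u i else s i)"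

text \<open>Identification of A in V_I with A tensor identity in V_S (I a subset of S).\<close>
definition emb :: "nat \<Rightarrow> nat set \<Rightarrow> nat set \<Rightarrow> op \<Rightarrow> op" where
  "emb d I S A = (\<lambda>s t. if s \<in> cfgs d S \<and> t \<in> cfgs d S \<and> (\<forall>i\<in>S - I. s i = t i)
                        then A (restr I s) (restr I t) else 0)"

definition opmul :: "nat \<Rightarrow> nat set \<Rightarrow> op \<Rightarrow> op \<Rightarrow> op" where
  "opmul d S A B = (\<lambda>s t. if s \<in> cfgs d S \<and> t \<in> cfgs d S
                          then \<Sum>u\<in>cfgs d S. A s u * B u t else 0)"

definition ptr :: "nat \<Rightarrow> nat set \<Rightarrow> nat set \<Rightarrow> op \<Rightarrow> op" where
  "ptr d S T A = (\<lambda>s t. if s \<in> cfgs d (S - T) \<and> t \<in> cfgs d (S - T)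
                         then \<Sum>u\<in>cfgs d T. A (glue T u s) (glue T u t) else 0)"

definition optr :: "nat \<Rightarrow> nat set \<Rightarrow> op \<Rightarrow> complex" where
  "optr d S A = (\<Sum>s\<in>cfgs d S. A s s)"

definition hs :: "nat \<Rightarrow> nat set \<Rightarrow> op \<Rightarrow> op \<Rightarrow> complex" where
  "hs d S A B = (\<Sum>s\<in>cfgs d S. \<Sum>t\<in>cfgs d S. cnj (A s t) * B s t)"

text \<open>Tensor product X_i1 ... X_ik of single-site operators X i in V_{i}, i in S.\<close>
definition prodX :: "nat \<Rightarrow> nat set \<Rightarrow> (nat \<Rightarrow> op) \<Rightarrow> op" where
  "prodX d S X = (\<lambda>s t. if s \<in> cfgs d S \<and> t \<in> cfgs d S
                         then \<Prod>i\<in>S. X i (restr {i} s) (restr {i} t) else 0)"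

text \<open>The map E_I^J : V_J -> V_I, X |-> tr_{N \ I}[X Oh], for the chain {1..N}.\<close>
definition Emap :: "nat \<Rightarrow> nat \<Rightarrow> op \<Rightarrow> nat set \<Rightarrow> nat set \<Rightarrow> op \<Rightarrow> op" where
  "Emap d N Oh I J = (\<lambda>X. ptr d {1..N} ({1..N} - I) (opmul d {1..N} (emb d J {1..N} X) Oh))"

definition Erank :: "nat \<Rightarrow> nat \<Rightarrow> op \<Rightarrow> nat set \<Rightarrow> nat set \<Rightarrow> nat" where
  "Erank d N Oh I J = vector_space.dim opscale (Emap d N Oh I J ` opsp d J)"

text \<open>Moore--Penrose pseudoinverse of a linear map E : V_J -> V_I (w.r.t. the
  Hilbert--Schmidt inner products): pinv y is the unique x in V_J orthogonal to ker E
  such that y - E x is orthogonal to the range of E (minimal-norm least-squares solution).\<close>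
definition pinv :: "nat \<Rightarrow> nat set \<Rightarrow> nat set \<Rightarrow> (op \<Rightarrow> op) \<Rightarrow> op \<Rightarrow> op" where
  "pinv d I J E y = (THE x. x \<in> opsp d J
      \<and> (\<forall>z\<in>opsp d J. E z = 0 \<longrightarrow> hs d J z x = 0)
      \<and> (\<forall>z\<in>opsp d J. hs d I (E z) (y - E x) = 0))"

text \<open>(l,r)-invertibility of Oh (the range conditions on l, r are stated separately).\<close>
definition lr_invertible :: "nat \<Rightarrow> nat \<Rightarrow> op \<Rightarrow> nat \<Rightarrow> nat \<Rightarrow> bool" where
  "lr_invertible d N Oh l r \<longleftrightarrow>
     (\<forall>k. l \<le> k \<and> k \<le> N - r - 1 \<longrightarrow>
        Erank d N Oh {k - l + 1..k} {k + 1..k + r} = Erank d N Oh {1..k} {k + 1..N})"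

text \<open>Yseq j = Y_(N-r-j): Y_(N-r) = X_(N-r+1)...X_N, and
  Y_(k-1) = Ebar_{k-l..k-1}^{k..k+r-1} (E_{k-l..k-1}^{k..k+r} (X_k Y_k)).\<close>
fun Yseq :: "nat \<Rightarrow> nat \<Rightarrow> op \<Rightarrow> nat \<Rightarrow> nat \<Rightarrow> (nat \<Rightarrow> op) \<Rightarrow> nat \<Rightarrow> op" where
  "Yseq d N Oh l r X 0 = prodX d {N - r + 1..N} X"
| "Yseq d N Oh l r X (Suc j) =
     (let k = N - r - j in
        pinv d {k - l..k - 1} {k..k + r - 1} (Emap d N Oh {k - l..k - 1} {k..k + r - 1})
          (Emap d N Oh {k - l..k - 1} {k..k + r}
             (opmul d {k..k + r} (emb d {k} {k..k + r} (X k))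
                                 (emb d {k + 1..k + r} {k..k + r} (Yseq d N Oh l r X j)))))"

definition Yop :: "nat \<Rightarrow> nat \<Rightarrow> op \<Rightarrow> nat \<Rightarrow> nat \<Rightarrow> (nat \<Rightarrow> op) \<Rightarrow> nat \<Rightarrow> op" where
  "Yop d N Oh l r X k = Yseq d N Oh l r X (N - r - k)"

end

theory Submission
  imports Defs "HOL-Library.FuncSet"
begin


lemma fun_sum_apply: "(sum f A) x = sum (\<lambda>a. f a x) A"
  by (induction A rule: infinite_finite_induct) auto

lemma fun_sum_apply2: "(sum f A) x y = sum (\<lambda>a. f a x y) A"
  by (simp add: fun_sum_apply)

lemma finite_cfgs: "finite S \<Longrightarrow> finite (cfgs d S)"
proof -
  assume fS: "finite S"
  have "cfgs d S \<subseteq> (\<lambda>f. restr S f) ` (PiE S (\<lambda>_. {..<d}))"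
  proof
    fix s assume s: "s \<in> cfgs d S"
    have "s = restr S (restrict s S)" using s
      by (auto simp: restr_def cfgs_def fun_eq_iff)
    moreover have "restrict s S \<in> PiE S (\<lambda>_. {..<d})" using s by (auto simp: cfgs_def)
    ultimately show "s \<in> (\<lambda>f. restr S f) ` (PiE S (\<lambda>_. {..<d}))" by blast
  qed
  moreover have "finite (PiE S (\<lambda>_. {..<d}))" using fS by (intro finite_PiE) auto
  ultimately show ?thesis by (meson finite_imageI finite_subset)
qed

lemma restr_cfgs: "s \<in> cfgs d S \<Longrightarrow> T \<subseteq> S \<Longrightarrow> restr T s \<in> cfgs d T"
  by (auto simp: restr_def cfgs_def)

lemma restr_id: "s \<in> cfgs d S \<Longrightarrow> restr S s = s"
  by (auto simp: restr_def cfgs_def fun_eq_iff)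

lemma restr_restr: "A \<subseteq> B \<Longrightarrow> restr A (restr B s) = restr A s"
  by (auto simp: restr_def fun_eq_iff)

lemma glue_cfgs: "u \<in> cfgs d T \<Longrightarrow> s \<in> cfgs d S \<Longrightarrow> glue T u s \<in> cfgs d (T \<union> S)"
  by (auto simp: glue_def cfgs_def)

lemma cfgs_eqI: "s \<in> cfgs d S \<Longrightarrow> t \<in> cfgs d S \<Longrightarrow> (\<forall>i\<in>S. s i = t i) \<Longrightarrow> s = t"
  by (auto simp: cfgs_def fun_eq_iff)

lemma sum_cfgs_split:
  assumes "A \<inter> B = {}" "finite A" "finite B"
  shows "(\<Sum>s\<in>cfgs d (A \<union> B). f s) = (\<Sum>a\<in>cfgs d A. \<Sum>b\<in>cfgs d B. f (glue A a b))"
proof -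
  have bij: "bij_betw (\<lambda>(a,b). glue A a b) (cfgs d A \<times> cfgs d B) (cfgs d (A \<union> B))"
  proof (rule bij_betw_imageI)
    show "inj_on (\<lambda>(a, b). glue A a b) (cfgs d A \<times> cfgs d B)"
    proof (rule inj_onI, clarify)
      fix a b a' b' assume h: "a \<in> cfgs d A" "b \<in> cfgs d B" "a' \<in> cfgs d A" "b' \<in> cfgs d B"
        and e: "glue A a b = glue A a' b'"
      have "\<forall>i. glue A a b i = glue A a' b' i" using e by simp
      then show "a = a' \<and> b = b'" using h assms(1)
        by (auto simp: glue_def cfgs_def fun_eq_iff) (metis disjoint_iff)+
    qed
    show "(\<lambda>(a, b). glue A a b) ` (cfgs d A \<times> cfgs d B) = cfgs d (A \<union> B)"
    proof
      show "(\<lambda>(a, b). glue A a b) ` (cfgs d A \<times> cfgs d B) \<subseteq> cfgs d (A \<union> B)"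
        by (auto intro: glue_cfgs)
      show "cfgs d (A \<union> B) \<subseteq> (\<lambda>(a, b). glue A a b) ` (cfgs d A \<times> cfgs d B)"
      proof
        fix s assume s: "s \<in> cfgs d (A \<union> B)"
        have "s = glue A (restr A s) (restr B s)" using s
          by (auto simp: glue_def restr_def cfgs_def fun_eq_iff)
        moreover have "(restr A s, restr B s) \<in> cfgs d A \<times> cfgs d B"
          using s by (auto intro: restr_cfgs)
        ultimately show "s \<in> (\<lambda>(a, b). glue A a b) ` (cfgs d A \<times> cfgs d B)"
          by (metis (no_types, lifting) case_prod_conv image_eqI)
      qed
    qed
  qed
  have "(\<Sum>a\<in>cfgs d A. \<Sum>b\<in>cfgs d B. f (glue A a b)) = (\<Sum>p\<in>cfgs d A \<times> cfgs d B. f ((\<lambda>(a,b). glue A a b) p))"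
    by (simp add: sum.cartesian_product split_def)
  also have "\<dots> = (\<Sum>s\<in>cfgs d (A \<union> B). f s)"
    by (rule sum.reindex_bij_betw[OF bij])
  finally show ?thesis by simp
qed



interpretation opv: vector_space opscale
  by unfold_locales (auto simp: opscale_def fun_eq_iff algebra_simps)

lemma opscale_apply: "opscale c A s t = c * A s t" by (simp add: opscale_def)

lemma subspace_opsp: "opv.subspace (opsp d S)"
  unfolding opv.subspace_def by (auto simp: opsp_def opscale_apply)

definition unit :: "cfg \<Rightarrow> cfg \<Rightarrow> op" where
  "unit a b = (\<lambda>s t. if s = a \<and> t = b then 1 else 0)"

definition units :: "nat \<Rightarrow> nat set \<Rightarrow> op set" where
  "units d S = (\<lambda>(a,b). unit a b) ` (cfgs d S \<times> cfgs d S)"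

lemma finite_units: "finite S \<Longrightarrow> finite (units d S)"
  by (simp add: units_def finite_cfgs)

lemma opsp_span: assumes "finite S" shows "opsp d S \<subseteq> opv.span (units d S)"
proof
  fix A assume A: "A \<in> opsp d S"
  have eq: "A = (\<Sum>p\<in>cfgs d S \<times> cfgs d S. opscale (A (fst p) (snd p)) (unit (fst p) (snd p)))"
  proof (intro ext)
    fix s t
    show "A s t = (\<Sum>p\<in>cfgs d S \<times> cfgs d S. opscale (A (fst p) (snd p)) (unit (fst p) (snd p))) s t"
    proof (cases "s \<in> cfgs d S \<and> t \<in> cfgs d S")
      case True
      have "(\<Sum>p\<in>cfgs d S \<times> cfgs d S. opscale (A (fst p) (snd p)) (unit (fst p) (snd p))) s t
          = (\<Sum>p\<in>cfgs d S \<times> cfgs d S. if p = (s,t) then A s t else 0)"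
        by (simp add: fun_sum_apply2 unit_def opscale_apply) (rule sum.cong, auto)
      also have "\<dots> = A s t" using True assms by (simp add: finite_cfgs)
      finally show ?thesis by simp
    next
      case False
      then have "A s t = 0" using A by (auto simp: opsp_def)
      moreover have "(\<Sum>p\<in>cfgs d S \<times> cfgs d S. opscale (A (fst p) (snd p)) (unit (fst p) (snd p))) s t = 0"
        using False by (simp add: fun_sum_apply2 unit_def opscale_apply) (rule sum.neutral, auto)
      ultimately show ?thesis by simp
    qed
  qed
  have "(\<Sum>p\<in>cfgs d S \<times> cfgs d S. opscale (A (fst p) (snd p)) (unit (fst p) (snd p))) \<in> opv.span (units d S)"
    by (intro opv.span_sum opv.span_scale opv.span_base) (auto simp: units_def)
  then show "A \<in> opv.span (units d S)" using eq by simp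
qed



interpretation opp: vector_space_pair opscale opscale ..

lemma lemmaA:
  assumes sU: "opv.subspace U" and sW: "opv.subspace W" and UW: "U \<subseteq> W"
    and WF: "W \<subseteq> opv.span F" and fF: "finite F"
    and lin: "Vector_Spaces.linear opscale opscale f"
    and deq: "opv.dim (f ` U) = opv.dim W"
  shows "U = W \<and> (\<forall>x\<in>W. f x = 0 \<longrightarrow> x = 0)"
proof -
  obtain B where B: "B \<subseteq> U" "opv.independent B" "U \<subseteq> opv.span B" "card B = opv.dim U"
    using opv.basis_exists by blast
  have BF: "finite B \<and> card B \<le> card F"
    using opv.independent_span_bound[OF fF B(2)] B(1) UW WF by blast
  obtain C where C: "C \<subseteq> W" "opv.independent C" "W \<subseteq> opv.span C" "card C = opv.dim W"
    using opv.basis_exists by blast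
  have CF: "finite C"
    using opv.independent_span_bound[OF fF C(2)] C(1) WF by blast
  have BC: "card B \<le> card C"
    using opv.independent_span_bound[OF CF B(2)] B(1) UW C(3) by blast
  have spanfB: "opv.span (f ` B) = f ` opv.span B"
    using opp.linear_span_image[OF lin] by simp
  have fUs: "f ` U \<subseteq> opv.span (f ` B)"
    using B(3) spanfB by auto
  have d1: "opv.dim (f ` U) \<le> card (f ` B)"
    using opv.dim_le_card[OF fUs] BF by simp
  have d2: "card (f ` B) \<le> card B" using BF card_image_le by blast
  have eqs: "card (f ` B) = card B" "card B = card C"
    using d1 d2 BC deq C(4) by linarith+
  have WB: "W \<subseteq> opv.span B"
  proof
    fix w assume w: "w \<in> W"
    show "w \<in> opv.span B"
    proof (rule ccontr)
      assume nw: "w \<notin> opv.span B"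
      have ind: "opv.independent (insert w B)" using opv.independent_insertI[OF nw B(2)] .
      have "insert w B \<subseteq> opv.span C" using w C(3) B(1) UW opv.span_superset by blast
      then have "card (insert w B) \<le> card C"
        using opv.independent_span_bound[OF CF ind] by blast
      moreover have "w \<notin> B" using nw opv.span_superset by blast
      ultimately show False using eqs BF by simp
    qed
  qed
  have UeqW: "U = W"
  proof
    show "U \<subseteq> W" by fact
    show "W \<subseteq> U" using WB opv.span_minimal[OF B(1) sU] by blast
  qed
  have injB: "inj_on f B" using eqs(1) BF by (simp add: inj_on_iff_eq_card)
  have indfB: "opv.independent (f ` B)"
  proof (rule ccontr)
    assume "\<not> opv.independent (f ` B)"
    then obtain a where a: "a \<in> f ` B" "a \<in> opv.span (f ` B - {a})"
      by (auto simp: opv.dependent_def)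
    have "opv.span (f ` B) \<subseteq> opv.span (f ` B - {a})"
    proof (rule opv.span_minimal)
      show "f ` B \<subseteq> opv.span (f ` B - {a})"
      proof
        fix x assume "x \<in> f ` B"
        then show "x \<in> opv.span (f ` B - {a})"
          using a(2) opv.span_base[of x "f ` B - {a}"] by (cases "x = a") auto
      qed
    qed auto
    then have "f ` U \<subseteq> opv.span (f ` B - {a})" using fUs by blast
    then have "opv.dim (f ` U) \<le> card (f ` B - {a})"
      using opv.dim_le_card BF by blast
    moreover have "card (f ` B - {a}) < card (f ` B)"
      using a(1) BF by (meson card_Diff1_less finite_imageI)
    ultimately show False using eqs deq C(4) d1 by linarith
  qed
  have "\<forall>x\<in>W. f x = 0 \<longrightarrow> x = 0"
    using opp.linear_indep_image_lemma[OF lin _ indfB injB] BF WB by blast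
  then show ?thesis using UeqW by blast
qed



lemma hs_add2: "hs d S a (b + c) = hs d S a b + hs d S a c"
  by (simp add: hs_def algebra_simps sum.distrib)
lemma hs_diff2: "hs d S a (b - c) = hs d S a b - hs d S a c"
  by (simp add: hs_def algebra_simps sum_subtractf)
lemma hs_add1: "hs d S (a + b) c = hs d S a c + hs d S b c"
  by (simp add: hs_def algebra_simps sum.distrib)
lemma hs_scale2: "hs d S a (opscale c b) = c * hs d S a b"
  by (simp add: hs_def sum_distrib_left algebra_simps opscale_apply)
lemma hs_scale1: "hs d S (opscale c a) b = cnj c * hs d S a b"
  by (simp add: hs_def sum_distrib_left algebra_simps opscale_apply)
lemma hs_zero2: "hs d S a 0 = 0" by (simp add: hs_def)
lemma hs_zero1: "hs d S 0 a = 0" by (simp add: hs_def)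
lemma hs_sum2: "hs d S a (sum f G) = (\<Sum>g\<in>G. hs d S a (f g))"
proof (induction G rule: infinite_finite_induct)
  case (insert x F)
  then show ?case by (simp only: sum.insert[OF insert(1,2)] hs_add2 insert(3))
qed (simp_all only: sum.infinite sum.empty hs_zero2 not_False_eq_True)
lemma hs_cnj: "hs d S b a = cnj (hs d S a b)"
  by (simp add: hs_def mult.commute)

lemma hs_self_zero:
  assumes "finite S" "a \<in> opsp d S" "hs d S a a = 0" shows "a = 0"
proof -
  have eq: "hs d S a a = of_real (\<Sum>s\<in>cfgs d S. \<Sum>t\<in>cfgs d S. (cmod (a s t))\<^sup>2)"
  proof -
    show ?thesis
      unfolding hs_def of_real_sum by (intro sum.cong refl) (metis complex_norm_square mult.commute)
  qed
  then have z: "(\<Sum>s\<in>cfgs d S. \<Sum>t\<in>cfgs d S. (cmod (a s t))\<^sup>2) = 0" using assms(3) of_real_eq_0_iff by metis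
  have fin: "finite (cfgs d S)" using assms(1) by (simp add: finite_cfgs)
  have "\<forall>s\<in>cfgs d S. (\<Sum>t\<in>cfgs d S. (cmod (a s t))\<^sup>2) = 0"
    using z by (subst (asm) sum_nonneg_eq_0_iff[OF fin]) (auto intro: sum_nonneg)
  then have "\<forall>s\<in>cfgs d S. \<forall>t\<in>cfgs d S. (cmod (a s t))\<^sup>2 = 0"
    using fin by (subst (asm) sum_nonneg_eq_0_iff) auto
  then show "a = 0" using assms(2) by (auto simp: opsp_def fun_eq_iff)
qed

lemma hs_span_zero:
  assumes "\<forall>g\<in>G. hs d S g x = 0" "z \<in> opv.span G" shows "hs d S z x = 0"
proof -
  have "opv.subspace {z. hs d S z x = 0}"
    unfolding opv.subspace_def by (auto simp: hs_add1 hs_scale1 hs_zero1)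
  then have "opv.span G \<subseteq> {z. hs d S z x = 0}" using assms(1) by (intro opv.span_minimal) auto
  then show ?thesis using assms(2) by blast
qed

lemma gram_schmidt:
  assumes "finite F" "F \<subseteq> opsp d S" "finite S"
  shows "\<exists>G. finite G \<and> G \<subseteq> opv.span F \<and> F \<subseteq> opv.span G \<and> (\<forall>g\<in>G. hs d S g g \<noteq> 0)
           \<and> (\<forall>g\<in>G. \<forall>h\<in>G. g \<noteq> h \<longrightarrow> hs d S g h = 0)"
  using assms(1,2)
proof (induction F rule: finite_induct)
  case empty
  show ?case by (rule exI[of _ "{}"]) auto
next
  case (insert a F)
  have "F \<subseteq> opsp d S" using insert.prems by simp
  with insert.IH obtain G where G: "finite G" "G \<subseteq> opv.span F" "F \<subseteq> opv.span G"
    "\<forall>g\<in>G. hs d S g g \<noteq> 0" "\<forall>g\<in>G. \<forall>h\<in>G. g \<noteq> h \<longrightarrow> hs d S g h = 0" by blast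
  define p where "p = (\<Sum>g\<in>G. opscale (hs d S g a / hs d S g g) g)"
  define a' where "a' = a - p"
  have pspan: "p \<in> opv.span G" unfolding p_def
    by (intro opv.span_sum opv.span_scale opv.span_base) auto
  have orth: "\<forall>h\<in>G. hs d S h a' = 0"
  proof
    fix h assume h: "h \<in> G"
    have "hs d S h p = (\<Sum>g\<in>G. (hs d S g a / hs d S g g) * hs d S h g)"
      unfolding p_def by (simp add: hs_sum2 hs_scale2)
    also have "\<dots> = (\<Sum>g\<in>G. if g = h then hs d S h a else 0)"
      using G(4,5) h by (intro sum.cong) auto
    also have "\<dots> = hs d S h a" using G(1) h by simp
    finally show "hs d S h a' = 0" by (simp add: a'_def hs_diff2)
  qed
  have "G \<subseteq> opv.span (insert a F)" using G(2) opv.span_mono[of F "insert a F"] by blast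
  then have Gsub: "opv.span G \<subseteq> opv.span (insert a F)" by (rule opv.span_minimal) simp
  show ?case
  proof (cases "a' = 0")
    case True
    then have "a = p" by (simp add: a'_def)
    have "G \<subseteq> opv.span (insert a F)" using Gsub opv.span_superset by blast
    moreover have "insert a F \<subseteq> opv.span G" using G(3) pspan \<open>a = p\<close> by blast
    ultimately show ?thesis using G by blast
  next
    case False
    have a'sp: "a' \<in> opv.span (insert a F)" unfolding a'_def
      using pspan Gsub by (intro opv.span_diff) (auto intro: opv.span_base)
    have insF: "insert a F \<subseteq> opsp d S" using insert.prems by simp
    have "opv.span (insert a F) \<subseteq> opsp d S"
      using insF subspace_opsp by (rule opv.span_minimal)
    then have a'op: "a' \<in> opsp d S" using a'sp by blast
    have a'nz: "hs d S a' a' \<noteq> 0" using False hs_self_zero[OF assms(3) a'op] by blast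
    have "a = a' + p" by (simp add: a'_def)
    moreover have "a' \<in> opv.span (insert a' G)" by (rule opv.span_base) simp
    moreover have "p \<in> opv.span (insert a' G)" using pspan opv.span_mono[of G "insert a' G"] by blast
    ultimately have aS: "a \<in> opv.span (insert a' G)" using opv.span_add by metis
    moreover have FS: "F \<subseteq> opv.span (insert a' G)"
      using G(3) opv.span_mono[of G "insert a' G"] by blast
    moreover have f5: "\<forall>g\<in>insert a' G. \<forall>h\<in>insert a' G. g \<noteq> h \<longrightarrow> hs d S g h = 0"
    proof (intro ballI impI)
      fix g h assume g: "g \<in> insert a' G" and h: "h \<in> insert a' G" and gh: "g \<noteq> h"
      show "hs d S g h = 0"
      proof (cases "g = a'")
        case True
        then have "h \<in> G" using h gh by blast
        then show ?thesis using True orth hs_cnj[of d S a' h] by simp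
      next
        case False
        then have gG: "g \<in> G" using g by blast
        show ?thesis
        proof (cases "h = a'")
          case True then show ?thesis using gG orth by simp
        next
          case False then show ?thesis using gG h gh G(5) by blast
        qed
      qed
    qed
    moreover have f2: "insert a' G \<subseteq> opv.span (insert a F)"
      using a'sp Gsub opv.span_superset[of G] by blast
    moreover have f4: "\<forall>g\<in>insert a' G. hs d S g g \<noteq> 0" using a'nz G(4) by blast
    have f3: "insert a F \<subseteq> opv.span (insert a' G)" using aS FS by blast
    have f1: "finite (insert a' G)" using G(1) by blast
    show ?thesis
      apply (rule exI[of _ "insert a' G"])
      using f1 f2 f3 f4 f5 by blast
  qed
qed



lemma projection:
  assumes fJ: "finite J" and sK: "opv.subspace K" and KJ: "K \<subseteq> opsp d J" and x: "x \<in> opsp d J"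
  shows "\<exists>p\<in>K. \<forall>z\<in>K. hs d J z (x - p) = 0"
proof -
  obtain B where B: "B \<subseteq> K" "opv.independent B" "K \<subseteq> opv.span B" "card B = opv.dim K"
    using opv.basis_exists by blast
  have fB: "finite B"
    using opv.independent_span_bound[OF finite_units[OF fJ] B(2)] B(1) KJ opsp_span[OF fJ] by blast
  obtain G where G: "finite G" "G \<subseteq> opv.span B" "B \<subseteq> opv.span G" "\<forall>g\<in>G. hs d J g g \<noteq> 0"
    "\<forall>g\<in>G. \<forall>h\<in>G. g \<noteq> h \<longrightarrow> hs d J g h = 0"
  proof -
    have BJ: "B \<subseteq> opsp d J" using B(1) KJ by blast
    from gram_schmidt[OF fB BJ fJ] show ?thesis using that by blast
  qed
  have spB: "opv.span B \<subseteq> K" using opv.span_minimal[OF B(1) sK] .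
  have GK: "G \<subseteq> K" using G(2) spB by blast
  have "opv.span B \<subseteq> opv.span G" using opv.span_minimal[OF G(3)] by simp
  then have KG: "K \<subseteq> opv.span G" using B(3) by blast
  define p where "p = (\<Sum>g\<in>G. opscale (hs d J g x / hs d J g g) g)"
  have pK: "p \<in> K"
  proof -
    have "p \<in> opv.span G" unfolding p_def
      by (intro opv.span_sum opv.span_scale opv.span_base) auto
    moreover have "opv.span G \<subseteq> K" using opv.span_minimal[OF GK sK] .
    ultimately show ?thesis by blast
  qed
  have orth: "\<forall>h\<in>G. hs d J h (x - p) = 0"
  proof
    fix h assume h: "h \<in> G"
    have "hs d J h p = (\<Sum>g\<in>G. (hs d J g x / hs d J g g) * hs d J h g)"
      unfolding p_def by (simp add: hs_sum2 hs_scale2)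
    also have "\<dots> = (\<Sum>g\<in>G. if g = h then hs d J h x else 0)"
      using G(4,5) h by (intro sum.cong) auto
    also have "\<dots> = hs d J h x" using G(1) h by simp
    finally show "hs d J h (x - p) = 0" by (simp add: hs_diff2)
  qed
  show ?thesis using pK orth hs_span_zero KG by blast
qed

lemma pinv_spec:
  assumes fI: "finite I" and fJ: "finite J"
    and lin: "Vector_Spaces.linear opscale opscale E"
    and rng: "\<forall>z\<in>opsp d J. E z \<in> opsp d I"
    and y: "y \<in> E ` opsp d J"
  shows "pinv d I J E y \<in> opsp d J \<and> E (pinv d I J E y) = y"
proof -
  define P where "P x = (x \<in> opsp d J \<and> (\<forall>z\<in>opsp d J. E z = 0 \<longrightarrow> hs d J z x = 0)
      \<and> (\<forall>z\<in>opsp d J. hs d I (E z) (y - E x) = 0))" for x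
  define K where "K = {z \<in> opsp d J. E z = 0}"
  have sK: "opv.subspace K"
    unfolding opv.subspace_def K_def
    using subspace_opsp[of d J] unfolding opv.subspace_def
    by (auto simp: opp.linear_add[OF lin] opp.linear_scale[OF lin] opp.linear_0[OF lin])
  obtain x0 where x0: "x0 \<in> opsp d J" "E x0 = y" using y by blast
  obtain p where p: "p \<in> K" "\<forall>z\<in>K. hs d J z (x0 - p) = 0"
    using projection[OF fJ sK _ x0(1)] K_def by blast
  have ex: "P (x0 - p)"
  proof -
    have "x0 - p \<in> opsp d J" using x0(1) p(1) K_def subspace_opsp opv.subspace_diff by blast
    moreover have "E (x0 - p) = y" using x0(2) p(1) K_def opp.linear_diff[OF lin] by simp
    ultimately show ?thesis unfolding P_def using p(2) K_def by (auto simp: hs_zero2)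
  qed
  have uniq: "x = x'" if Px: "P x" and Px': "P x'" for x x'
  proof -
    define w where "w = x - x'"
    have w: "w \<in> opsp d J" unfolding w_def using Px Px' P_def subspace_opsp opv.subspace_diff by blast
    have h1: "hs d I (E w) (y - E x) = 0" using Px w P_def by blast
    have h2: "hs d I (E w) (y - E x') = 0" using Px' w P_def by blast
    have "E w = E x - E x'" unfolding w_def using opp.linear_diff[OF lin] .
    then have "(y - E x') - (y - E x) = E w" by simp
    then have "hs d I (E w) (E w) = 0" using h1 h2
      by (metis hs_diff2 diff_self)
    then have Ew: "E w = 0" using hs_self_zero[OF fI] rng w by blast
    have "hs d J w x = 0" "hs d J w x' = 0" using Px Px' w Ew P_def by blast+
    then have "hs d J w w = 0" unfolding w_def[symmetric, of] using hs_diff2[of d J w x x'] w_def by simp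
    then show "x = x'" using hs_self_zero[OF fJ w] w_def by simp
  qed
  have "P (THE x. P x)" using ex uniq by (intro theI[of P "x0 - p"]) auto
  moreover have "pinv d I J E y = (THE x. P x)" unfolding pinv_def P_def by simp
  ultimately have "P (pinv d I J E y)" by simp
  moreover have "E (x0 - p) = y" using x0(2) p(1) K_def opp.linear_diff[OF lin] by simp
  moreover have "pinv d I J E y = x0 - p" using uniq ex \<open>P (pinv d I J E y)\<close> by blast
  ultimately show ?thesis unfolding P_def by simp
qed



lemma sum_single:
  assumes "finite U" "u0 \<in> U" "\<And>u. u \<in> U \<Longrightarrow> u \<noteq> u0 \<Longrightarrow> f u = 0"
  shows "sum f U = f u0"
proof -
  have "sum f U = f u0 + sum f (U - {u0})" using assms(1,2) by (simp add: sum.remove)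
  also have "sum f (U - {u0}) = 0" using assms(3) by (intro sum.neutral) auto
  finally show ?thesis by simp
qed

lemma opmul_emb:
  assumes AB: "A \<inter> B = {}" and AS: "A \<subseteq> S" and BS: "B \<subseteq> S" and fS: "finite S"
  shows "opmul d S (emb d A S P) (emb d B S Q) = (\<lambda>s t. if s \<in> cfgs d S \<and> t \<in> cfgs d S \<and> (\<forall>i\<in>S-(A\<union>B). s i = t i)
     then P (restr A s) (restr A t) * Q (restr B s) (restr B t) else 0)"
proof (intro ext)
  fix s t
  show "opmul d S (emb d A S P) (emb d B S Q) s t = (if s \<in> cfgs d S \<and> t \<in> cfgs d S \<and> (\<forall>i\<in>S-(A\<union>B). s i = t i)
     then P (restr A s) (restr A t) * Q (restr B s) (restr B t) else 0)"
  proof (cases "s \<in> cfgs d S \<and> t \<in> cfgs d S")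
    case False then show ?thesis by (auto simp: opmul_def)
  next
    case True
    define u0 where "u0 = (\<lambda>i. if i \<in> A then t i else s i)"
    have u0S: "u0 \<in> cfgs d S" using True by (auto simp: u0_def cfgs_def)
    have rA: "restr A u0 = restr A t" by (auto simp: restr_def u0_def)
    have rB: "restr B u0 = restr B s" using AB by (auto simp: restr_def u0_def fun_eq_iff)
    have single: "(\<Sum>u\<in>cfgs d S. emb d A S P s u * emb d B S Q u t) = emb d A S P s u0 * emb d B S Q u0 t"
    proof (rule sum_single[OF finite_cfgs[OF fS] u0S])
      fix u assume u: "u \<in> cfgs d S" "u \<noteq> u0"
      show "emb d A S P s u * emb d B S Q u t = 0"
      proof (rule ccontr)
        assume nz: "emb d A S P s u * emb d B S Q u t \<noteq> 0"
        then have c1: "\<forall>i\<in>S - A. s i = u i" and c2: "\<forall>i\<in>S - B. u i = t i"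
          by (auto simp: emb_def split: if_splits)
        have "u = u0"
        proof (rule cfgs_eqI[OF u(1) u0S], intro ballI)
          fix i assume i: "i \<in> S"
          show "u i = u0 i"
          proof (cases "i \<in> A")
            case True then show ?thesis using c2 i AB by (auto simp: u0_def)
          next
            case False then show ?thesis using c1 i by (auto simp: u0_def)
          qed
        qed
        then show False using u(2) by simp
      qed
    qed
    have e1: "emb d A S P s u0 = P (restr A s) (restr A t)"
      using True u0S rA by (auto simp: emb_def u0_def)
    have e2: "emb d B S Q u0 t = (if (\<forall>i\<in>S-(A\<union>B). s i = t i) then Q (restr B s) (restr B t) else 0)"
      using True u0S rB by (auto simp: emb_def u0_def)
    show ?thesis using True single e1 e2 by (simp add: opmul_def)
  qed
qed


lemma prodX_split:
  assumes AB: "A \<inter> B = {}" and fA: "finite A" and fB: "finite B"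
  shows "prodX d (A \<union> B) X = opmul d (A \<union> B) (emb d A (A \<union> B) (prodX d A X)) (emb d B (A \<union> B) (prodX d B X))"
proof -
  have fS: "finite (A \<union> B)" using fA fB by simp
  show ?thesis
  proof (subst opmul_emb[OF AB _ _ fS], simp, simp, intro ext)
    fix s t
    show "prodX d (A \<union> B) X s t = (if s \<in> cfgs d (A \<union> B) \<and> t \<in> cfgs d (A \<union> B) \<and> (\<forall>i\<in>A \<union> B - (A \<union> B). s i = t i)
        then prodX d A X (restr A s) (restr A t) * prodX d B X (restr B s) (restr B t) else 0)"
    proof (cases "s \<in> cfgs d (A \<union> B) \<and> t \<in> cfgs d (A \<union> B)")
      case False then show ?thesis by (auto simp: prodX_def)
    next
      case True
      have rA: "restr A s \<in> cfgs d A" "restr A t \<in> cfgs d A" "restr B s \<in> cfgs d B" "restr B t \<in> cfgs d B"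
        using True by (auto intro: restr_cfgs)
      have pA: "prodX d A X (restr A s) (restr A t) = (\<Prod>i\<in>A. X i (restr {i} s) (restr {i} t))"
        using rA by (auto simp: prodX_def restr_restr intro!: prod.cong)
      have pB: "prodX d B X (restr B s) (restr B t) = (\<Prod>i\<in>B. X i (restr {i} s) (restr {i} t))"
        using rA by (auto simp: prodX_def restr_restr intro!: prod.cong)
      show ?thesis using True pA pB fA fB AB by (simp add: prodX_def prod.union_disjoint)
    qed
  qed
qed

lemma emb_trans:
  assumes "J1 \<subseteq> J2" "J2 \<subseteq> S"
  shows "emb d J2 S (emb d J1 J2 X) = emb d J1 S X"
proof (intro ext)
  fix s t
  show "emb d J2 S (emb d J1 J2 X) s t = emb d J1 S X s t"
  proof (cases "s \<in> cfgs d S \<and> t \<in> cfgs d S")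
    case False then show ?thesis by (auto simp: emb_def)
  next
    case True
    then have c: "restr J2 s \<in> cfgs d J2" "restr J2 t \<in> cfgs d J2" using assms by (auto intro: restr_cfgs)
    have r: "restr J1 (restr J2 s) = restr J1 s" "restr J1 (restr J2 t) = restr J1 t"
      using assms by (auto simp: restr_restr)
    have "(\<forall>i\<in>S - J2. s i = t i) \<and> (\<forall>i\<in>J2 - J1. restr J2 s i = restr J2 t i) \<longleftrightarrow> (\<forall>i\<in>S - J1. s i = t i)"
      using assms by (auto simp: restr_def)
    then show ?thesis using True c r by (auto simp: emb_def)
  qed
qed

lemma glue_glue: "glue (T1 \<union> T2) (glue T1 u1 u2) s = glue T1 u1 (glue T2 u2 s)"
  by (auto simp: glue_def fun_eq_iff)

lemma ptr_comp:
  assumes T12: "T1 \<inter> T2 = {}" and S': "S' = S - T1" and T2S: "T2 \<subseteq> S'" and f1: "finite T1" and f2: "finite T2"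
  shows "ptr d S' T2 (ptr d S T1 M) = ptr d S (T1 \<union> T2) M"
proof (intro ext)
  fix s t
  have eqS: "S' - T2 = S - (T1 \<union> T2)" using S' by auto
  show "ptr d S' T2 (ptr d S T1 M) s t = ptr d S (T1 \<union> T2) M s t"
  proof (cases "s \<in> cfgs d (S' - T2) \<and> t \<in> cfgs d (S' - T2)")
    case False then show ?thesis using eqS by (auto simp: ptr_def)
  next
    case True
    have gl: "glue T2 u2 s \<in> cfgs d (S - T1)" "glue T2 u2 t \<in> cfgs d (S - T1)" if "u2 \<in> cfgs d T2" for u2
    proof -
      have "T2 \<union> (S' - T2) = S - T1" using S' T2S by auto
      then show "glue T2 u2 s \<in> cfgs d (S - T1)" "glue T2 u2 t \<in> cfgs d (S - T1)"
        using glue_cfgs[OF that, of s "S' - T2"] glue_cfgs[OF that, of t "S' - T2"] True by auto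
    qed
    have "ptr d S' T2 (ptr d S T1 M) s t = (\<Sum>u2\<in>cfgs d T2. \<Sum>u1\<in>cfgs d T1. M (glue T1 u1 (glue T2 u2 s)) (glue T1 u1 (glue T2 u2 t)))"
      using True gl by (auto simp: ptr_def intro!: sum.cong)
    also have "\<dots> = (\<Sum>u1\<in>cfgs d T1. \<Sum>u2\<in>cfgs d T2. M (glue T1 u1 (glue T2 u2 s)) (glue T1 u1 (glue T2 u2 t)))"
      by (rule sum.swap)
    also have "\<dots> = (\<Sum>u\<in>cfgs d (T1 \<union> T2). M (glue (T1 \<union> T2) u s) (glue (T1 \<union> T2) u t))"
      using sum_cfgs_split[OF T12 f1 f2, of "\<lambda>u. M (glue (T1 \<union> T2) u s) (glue (T1 \<union> T2) u t)"]
      by (simp add: glue_glue)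
    also have "\<dots> = ptr d S (T1 \<union> T2) M s t" using True eqS by (simp add: ptr_def)
    finally show ?thesis .
  qed
qed

lemma optr_ptr:
  assumes BS: "B \<subseteq> S" and fS: "finite S"
  shows "optr d S M = optr d B (ptr d S (S - B) M)"
proof -
  have SS: "S = (S - B) \<union> B" using BS by auto
  have dj: "(S - B) \<inter> B = {}" by auto
  have fSB: "finite (S - B)" "finite B" using fS BS finite_subset by auto
  have SB: "S - (S - B) = B" using BS by auto
  have "optr d S M = (\<Sum>u\<in>cfgs d (S - B). \<Sum>b\<in>cfgs d B. M (glue (S - B) u b) (glue (S - B) u b))"
    unfolding optr_def by (subst SS, rule sum_cfgs_split[OF dj fSB])
  also have "\<dots> = (\<Sum>b\<in>cfgs d B. \<Sum>u\<in>cfgs d (S - B). M (glue (S - B) u b) (glue (S - B) u b))"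
    by (rule sum.swap)
  also have "\<dots> = optr d B (ptr d S (S - B) M)"
    unfolding optr_def ptr_def SB by simp
  finally show ?thesis .
qed

lemma emb_glue:
  assumes JB: "J \<subseteq> B" and BS: "B \<subseteq> S" and T: "T = S - B"
    and u: "u \<in> cfgs d T" and u': "u' \<in> cfgs d T" and s: "s \<in> cfgs d B" and v: "v \<in> cfgs d B"
  shows "emb d J S X (glue T u s) (glue T u' v) = (if u' = u then emb d J B X s v else 0)"
proof -
  have TB: "T \<union> B = S" using T BS by auto
  have g1: "glue T u s \<in> cfgs d S" "glue T u' v \<in> cfgs d S"
    using glue_cfgs[OF u s] glue_cfgs[OF u' v] TB by auto
  have rJ: "restr J (glue T u s) = restr J s" "restr J (glue T u' v) = restr J v"
    using JB T by (auto simp: restr_def glue_def fun_eq_iff)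
  show ?thesis
  proof (cases "u' = u")
    case True
    have "(\<forall>i\<in>S - J. glue T u s i = glue T u' v i) \<longleftrightarrow> (\<forall>i\<in>B - J. s i = v i)"
      using True T JB BS by (auto simp: glue_def)
    then show ?thesis using True g1 rJ s v by (simp add: emb_def)
  next
    case False
    then obtain i where i: "i \<in> T" "u i \<noteq> u' i" using u u' cfgs_eqI by blast
    then have "i \<in> S - J" using T JB by auto
    moreover have "glue T u s i \<noteq> glue T u' v i" using i by (simp add: glue_def)
    ultimately show ?thesis using False by (auto simp: emb_def)
  qed
qed

lemma ptr_pull:
  assumes JB: "J \<subseteq> B" and BS: "B \<subseteq> S" and fS: "finite S"
  shows "ptr d S (S - B) (opmul d S (emb d J S X) M) = opmul d B (emb d J B X) (ptr d S (S - B) M)"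
proof (intro ext)
  fix s t
  define T where "T = S - B"
  have SB: "S - T = B" using BS T_def by auto
  have dj: "T \<inter> B = {}" by (auto simp: T_def)
  have fT: "finite T" "finite B" using fS BS finite_subset T_def by auto
  have TB: "T \<union> B = S" using T_def BS by auto
  show "ptr d S (S - B) (opmul d S (emb d J S X) M) s t = opmul d B (emb d J B X) (ptr d S (S - B) M) s t"
  proof (cases "s \<in> cfgs d B \<and> t \<in> cfgs d B")
    case False then show ?thesis using SB by (auto simp: ptr_def opmul_def T_def)
  next
    case True
    have gS: "glue T u s \<in> cfgs d S" "glue T u t \<in> cfgs d S" if "u \<in> cfgs d T" for u
      using glue_cfgs[OF that, of s B] glue_cfgs[OF that, of t B] True TB by auto
    have "ptr d S (S - B) (opmul d S (emb d J S X) M) s t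
        = (\<Sum>u\<in>cfgs d T. \<Sum>v\<in>cfgs d S. emb d J S X (glue T u s) v * M v (glue T u t))"
      using True gS SB unfolding T_def[symmetric] by (auto simp: ptr_def opmul_def intro!: sum.cong)
    also have "\<dots> = (\<Sum>u\<in>cfgs d T. \<Sum>u'\<in>cfgs d T. \<Sum>v\<in>cfgs d B. emb d J S X (glue T u s) (glue T u' v) * M (glue T u' v) (glue T u t))"
      by (subst TB[symmetric], subst sum_cfgs_split[OF dj fT]) simp
    also have "\<dots> = (\<Sum>u\<in>cfgs d T. \<Sum>u'\<in>cfgs d T. \<Sum>v\<in>cfgs d B. (if u' = u then emb d J B X s v * M (glue T u v) (glue T u t) else 0))"
      using emb_glue[OF JB BS T_def] True by (intro sum.cong refl) auto
    also have "\<dots> = (\<Sum>u\<in>cfgs d T. \<Sum>v\<in>cfgs d B. emb d J B X s v * M (glue T u v) (glue T u t))"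
    proof (rule sum.cong[OF refl])
      fix u assume u: "u \<in> cfgs d T"
      have "(\<Sum>u'\<in>cfgs d T. \<Sum>v\<in>cfgs d B. (if u' = u then emb d J B X s v * M (glue T u v) (glue T u t) else 0))
          = (\<Sum>u'\<in>cfgs d T. if u' = u then (\<Sum>v\<in>cfgs d B. emb d J B X s v * M (glue T u v) (glue T u t)) else 0)"
        by (intro sum.cong refl) auto
      also have "\<dots> = (\<Sum>v\<in>cfgs d B. emb d J B X s v * M (glue T u v) (glue T u t))"
        using u finite_cfgs[OF fT(1)] by simp
      finally show "(\<Sum>u'\<in>cfgs d T. \<Sum>v\<in>cfgs d B. (if u' = u then emb d J B X s v * M (glue T u v) (glue T u t) else 0))
          = (\<Sum>v\<in>cfgs d B. emb d J B X s v * M (glue T u v) (glue T u t))" .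
    qed
    also have "\<dots> = (\<Sum>v\<in>cfgs d B. emb d J B X s v * (\<Sum>u\<in>cfgs d T. M (glue T u v) (glue T u t)))"
      by (subst sum.swap) (simp add: sum_distrib_left)
    also have "\<dots> = opmul d B (emb d J B X) (ptr d S (S - B) M) s t"
      using True SB unfolding T_def[symmetric] by (auto simp: ptr_def opmul_def intro!: sum.cong)
    finally show ?thesis .
  qed
qed

lemma opmul_assoc:
  assumes fS: "finite S"
  shows "opmul d S (opmul d S A B) C = opmul d S A (opmul d S B C)"
proof (intro ext)
  fix s t
  show "opmul d S (opmul d S A B) C s t = opmul d S A (opmul d S B C) s t"
  proof (cases "s \<in> cfgs d S \<and> t \<in> cfgs d S")
    case False then show ?thesis by (auto simp: opmul_def)
  next
    case True
    have "opmul d S (opmul d S A B) C s t = (\<Sum>u\<in>cfgs d S. \<Sum>v\<in>cfgs d S. A s v * B v u * C u t)"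
      using True by (auto simp: opmul_def sum_distrib_right intro!: sum.cong)
    also have "\<dots> = (\<Sum>v\<in>cfgs d S. \<Sum>u\<in>cfgs d S. A s v * B v u * C u t)" by (rule sum.swap)
    also have "\<dots> = opmul d S A (opmul d S B C) s t"
      using True by (auto simp: opmul_def sum_distrib_left mult.assoc intro!: sum.cong)
    finally show ?thesis .
  qed
qed



lemma emb_opsp: "emb d J S X \<in> opsp d S"
  by (auto simp: emb_def opsp_def)

lemma ptr_opsp: "ptr d S T M \<in> opsp d (S - T)"
  by (auto simp: ptr_def opsp_def)

lemma Emap_opsp: "I \<subseteq> {1..N} \<Longrightarrow> Emap d N Oh I J X \<in> opsp d I"
  using ptr_opsp[of d "{1..N}" "{1..N} - I"] by (simp add: Emap_def Diff_Diff_Int Int_absorb1 inf.absorb2)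

lemma emb_add: "emb d J S (X + Y) = emb d J S X + emb d J S Y"
  by (auto simp: emb_def fun_eq_iff)
lemma emb_scale: "emb d J S (opscale c X) = opscale c (emb d J S X)"
  by (auto simp: emb_def fun_eq_iff opscale_def)
lemma opmul_add1: "opmul d S (A + B) C = opmul d S A C + opmul d S B C"
  by (auto simp: opmul_def fun_eq_iff algebra_simps sum.distrib)
lemma opmul_scale1: "opmul d S (opscale c A) C = opscale c (opmul d S A C)"
  by (auto simp: opmul_def fun_eq_iff opscale_def sum_distrib_left mult.assoc)
lemma ptr_add: "ptr d S T (A + B) = ptr d S T A + ptr d S T B"
  by (auto simp: ptr_def fun_eq_iff sum.distrib)
lemma ptr_scale: "ptr d S T (opscale c A) = opscale c (ptr d S T A)"
  by (auto simp: ptr_def fun_eq_iff opscale_def sum_distrib_left)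

lemma linear_ptr: "Vector_Spaces.linear opscale opscale (ptr d S T)"
  unfolding Vector_Spaces.linear_iff using opv.vector_space_axioms by (simp add: ptr_add ptr_scale)

lemma linear_Emap: "Vector_Spaces.linear opscale opscale (Emap d N Oh I J)"
  unfolding Vector_Spaces.linear_iff using opv.vector_space_axioms
  by (simp add: Emap_def emb_add emb_scale opmul_add1 opmul_scale1 ptr_add ptr_scale)

lemma Emap_emb:
  assumes "J1 \<subseteq> J2" "J2 \<subseteq> {1..N}"
  shows "Emap d N Oh I J1 X = Emap d N Oh I J2 (emb d J1 J2 X)"
  using emb_trans[OF assms] by (simp add: Emap_def)

lemma Emap_loc:
  assumes IlI: "Il \<subseteq> I" and IS: "I \<subseteq> {1..N}"
  shows "Emap d N Oh Il J X = ptr d I (I - Il) (Emap d N Oh I J X)"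
proof -
  have "ptr d I (I - Il) (Emap d N Oh I J X) = ptr d {1..N} (({1..N} - I) \<union> (I - Il)) (opmul d {1..N} (emb d J {1..N} X) Oh)"
    unfolding Emap_def
    by (rule ptr_comp) (use IlI IS in \<open>auto intro: finite_subset\<close>)
  moreover have "({1..N} - I) \<union> (I - Il) = {1..N} - Il" using IlI IS by auto
  ultimately show ?thesis by (simp add: Emap_def)
qed

lemma Emap_local:
  assumes IB: "I \<subseteq> B" and JB: "J \<subseteq> B" and BS: "B \<subseteq> {1..N}"
  shows "Emap d N Oh I J X = ptr d B (B - I) (opmul d B (emb d J B X) (ptr d {1..N} ({1..N} - B) Oh))"
proof -
  have "Emap d N Oh I J X = ptr d {1..N} (({1..N} - B) \<union> (B - I)) (opmul d {1..N} (emb d J {1..N} X) Oh)"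
  proof -
    have "({1..N} - B) \<union> (B - I) = {1..N} - I" using IB BS by auto
    then show ?thesis by (simp add: Emap_def)
  qed
  also have "\<dots> = ptr d B (B - I) (ptr d {1..N} ({1..N} - B) (opmul d {1..N} (emb d J {1..N} X) Oh))"
    by (rule ptr_comp[symmetric]) (use BS in \<open>auto intro: finite_subset\<close>)
  also have "\<dots> = ptr d B (B - I) (opmul d B (emb d J B X) (ptr d {1..N} ({1..N} - B) Oh))"
    using ptr_pull[OF JB BS] by simp
  finally show ?thesis .
qed

lemma trace_pair:
  assumes IS: "I \<subseteq> {1..N}"
  shows "optr d {1..N} (opmul d {1..N} (opmul d {1..N} (emb d I {1..N} P) (emb d J {1..N} Q)) Oh)
       = optr d I (opmul d I (emb d I I P) (Emap d N Oh I J Q))"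
proof -
  let ?S = "{1..N::nat}"
  have "optr d ?S (opmul d ?S (opmul d ?S (emb d I ?S P) (emb d J ?S Q)) Oh)
      = optr d ?S (opmul d ?S (emb d I ?S P) (opmul d ?S (emb d J ?S Q) Oh))"
    by (simp add: opmul_assoc)
  also have "\<dots> = optr d I (ptr d ?S (?S - I) (opmul d ?S (emb d I ?S P) (opmul d ?S (emb d J ?S Q) Oh)))"
    by (rule optr_ptr[OF IS]) simp
  also have "\<dots> = optr d I (opmul d I (emb d I I P) (ptr d ?S (?S - I) (opmul d ?S (emb d J ?S Q) Oh)))"
    using ptr_pull[OF subset_refl IS] by simp
  finally show ?thesis by (simp add: Emap_def)
qed



lemma inv_step:
  fixes k N l r :: nat
  assumes kl: "l + 1 \<le> k" and kN: "k + r \<le> N"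
  and rk: "Erank d N Oh {k-l..k-1} {k..k+r-1} = Erank d N Oh {1..k-1} {k..N}"
  shows "Emap d N Oh {1..k-1} {k..k+r} Z = Emap d N Oh {1..k-1} {k..k+r-1}
           (pinv d {k-l..k-1} {k..k+r-1} (Emap d N Oh {k-l..k-1} {k..k+r-1}) (Emap d N Oh {k-l..k-1} {k..k+r} Z))"
proof -
  define I where "I = {1..k-1}"
  define Il where "Il = {k-l..k-1}"
  define J1 where "J1 = {k..k+r-1}"
  define J0 where "J0 = {k..k+r}"
  define J2 where "J2 = {k..N}"
  define Pm where "Pm = ptr d I (I - Il)"
  have IS: "I \<subseteq> {1..N}" using kN kl by (auto simp: I_def)
  have IlI: "Il \<subseteq> I" using kl by (auto simp: I_def Il_def)
  have IlS: "Il \<subseteq> {1..N}" using IS IlI by blast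
  have J12: "J1 \<subseteq> J2" "J0 \<subseteq> J2" "J2 \<subseteq> {1..N}" using kN kl by (auto simp: J1_def J0_def J2_def)
  have fin: "finite I" "finite Il" "finite J1" by (auto simp: I_def Il_def J1_def)
  have loc: "Emap d N Oh Il J X = Pm (Emap d N Oh I J X)" for J X
    unfolding Pm_def by (rule Emap_loc[OF IlI IS])
  define U where "U = Emap d N Oh I J1 ` opsp d J1"
  define W where "W = Emap d N Oh I J2 ` opsp d J2"
  have sU: "opv.subspace U" unfolding U_def
    by (rule opp.linear_subspace_image[OF linear_Emap subspace_opsp])
  have sW: "opv.subspace W" unfolding W_def
    by (rule opp.linear_subspace_image[OF linear_Emap subspace_opsp])
  have UW: "U \<subseteq> W"
  proof
    fix a assume "a \<in> U"
    then obtain x where x: "x \<in> opsp d J1" "a = Emap d N Oh I J1 x" by (auto simp: U_def)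
    then have "a = Emap d N Oh I J2 (emb d J1 J2 x)" using Emap_emb[OF J12(1) J12(3)] by simp
    then show "a \<in> W" unfolding W_def using emb_opsp by blast
  qed
  have WF: "W \<subseteq> opv.span (units d I)"
    using Emap_opsp[OF IS, of d Oh J2] opsp_span[OF fin(1), of d] by (auto simp: W_def)
  have linP: "Vector_Spaces.linear opscale opscale Pm" unfolding Pm_def by (rule linear_ptr)
  have PU: "Pm ` U = Emap d N Oh Il J1 ` opsp d J1"
    unfolding U_def image_image using loc by simp
  have deq: "opv.dim (Pm ` U) = opv.dim W"
    using rk unfolding PU W_def Erank_def I_def Il_def J1_def J2_def by simp
  have A: "U = W \<and> (\<forall>x\<in>W. Pm x = 0 \<longrightarrow> x = 0)"
    by (rule lemmaA[OF sU sW UW WF finite_units[OF fin(1)] linP deq])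
  have bW: "Emap d N Oh I J0 Z \<in> W"
    using Emap_emb[OF J12(2) J12(3)] emb_opsp unfolding W_def by blast
  then obtain x0 where x0: "x0 \<in> opsp d J1" "Emap d N Oh I J1 x0 = Emap d N Oh I J0 Z"
    using A unfolding U_def by (metis imageE)
  define y where "y = Emap d N Oh Il J0 Z"
  have y: "y \<in> Emap d N Oh Il J1 ` opsp d J1"
    using x0 loc unfolding y_def by (metis image_eqI)
  define Yn where "Yn = pinv d Il J1 (Emap d N Oh Il J1) y"
  have Yn: "Yn \<in> opsp d J1 \<and> Emap d N Oh Il J1 Yn = y"
    unfolding Yn_def
    by (rule pinv_spec[OF fin(2) fin(3) linear_Emap _ y]) (use Emap_opsp[OF IlS] in blast)
  have aW: "Emap d N Oh I J1 Yn \<in> W" using Yn A unfolding U_def by blast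
  have "Pm (Emap d N Oh I J1 Yn) = Pm (Emap d N Oh I J0 Z)"
    using Yn loc unfolding y_def by metis
  then have "Pm (Emap d N Oh I J1 Yn - Emap d N Oh I J0 Z) = 0"
    using opp.linear_diff[OF linP] by simp
  moreover have "Emap d N Oh I J1 Yn - Emap d N Oh I J0 Z \<in> W"
    using aW bW sW opv.subspace_diff by blast
  ultimately have "Emap d N Oh I J1 Yn - Emap d N Oh I J0 Z = 0" using A by blast
  then have "Emap d N Oh I J1 Yn = Emap d N Oh I J0 Z" by (simp only: right_minus_eq)
  then show ?thesis unfolding Yn_def y_def I_def Il_def J1_def J0_def by simp
qed



lemma prodX_restr:
  assumes "A \<subseteq> S" "s \<in> cfgs d S" "t \<in> cfgs d S"
  shows "prodX d A X (restr A s) (restr A t) = (\<Prod>i\<in>A. X i (restr {i} s) (restr {i} t))"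
  using assms by (auto simp: prodX_def restr_restr intro!: prod.cong restr_cfgs)

definition Tk :: "nat \<Rightarrow> nat \<Rightarrow> op \<Rightarrow> nat \<Rightarrow> nat \<Rightarrow> (nat \<Rightarrow> op) \<Rightarrow> nat \<Rightarrow> complex" where
  "Tk d N Oh l r X k = optr d {1..N} (opmul d {1..N} (opmul d {1..N} (emb d {1..k} {1..N} (prodX d {1..k} X))
       (emb d {k+1..k+r} {1..N} (Yop d N Oh l r X k))) Oh)"

lemma mul_shift:
  fixes k N r :: nat
  assumes k1: "1 \<le> k" and kN: "k + r \<le> N"
  shows "opmul d {1..N} (emb d {1..k} {1..N} (prodX d {1..k} X)) (emb d {k+1..k+r} {1..N} Y)
       = opmul d {1..N} (emb d {1..k-1} {1..N} (prodX d {1..k-1} X))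
           (emb d {k..k+r} {1..N} (opmul d {k..k+r} (emb d {k} {k..k+r} (X k)) (emb d {k+1..k+r} {k..k+r} Y)))"
proof -
  let ?S = "{1..N::nat}"
  have e1: "opmul d ?S (emb d {1..k} ?S (prodX d {1..k} X)) (emb d {k+1..k+r} ?S Y)
     = (\<lambda>s t. if s \<in> cfgs d ?S \<and> t \<in> cfgs d ?S \<and> (\<forall>i\<in>?S-({1..k}\<union>{k+1..k+r}). s i = t i)
     then prodX d {1..k} X (restr {1..k} s) (restr {1..k} t) * Y (restr {k+1..k+r} s) (restr {k+1..k+r} t) else 0)"
    by (rule opmul_emb) (use kN k1 in auto)
  have e2: "opmul d ?S (emb d {1..k-1} ?S (prodX d {1..k-1} X)) (emb d {k..k+r} ?S (opmul d {k..k+r} (emb d {k} {k..k+r} (X k)) (emb d {k+1..k+r} {k..k+r} Y)))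
     = (\<lambda>s t. if s \<in> cfgs d ?S \<and> t \<in> cfgs d ?S \<and> (\<forall>i\<in>?S-({1..k-1}\<union>{k..k+r}). s i = t i)
     then prodX d {1..k-1} X (restr {1..k-1} s) (restr {1..k-1} t) *
       opmul d {k..k+r} (emb d {k} {k..k+r} (X k)) (emb d {k+1..k+r} {k..k+r} Y) (restr {k..k+r} s) (restr {k..k+r} t) else 0)"
    by (rule opmul_emb) (use kN k1 in auto)
  have e3: "opmul d {k..k+r} (emb d {k} {k..k+r} (X k)) (emb d {k+1..k+r} {k..k+r} Y)
     = (\<lambda>s t. if s \<in> cfgs d {k..k+r} \<and> t \<in> cfgs d {k..k+r} \<and> (\<forall>i\<in>{k..k+r}-({k}\<union>{k+1..k+r}). s i = t i)
     then X k (restr {k} s) (restr {k} t) * Y (restr {k+1..k+r} s) (restr {k+1..k+r} t) else 0)"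
    by (rule opmul_emb) auto
  have sets: "{1..k} \<union> {k+1..k+r} = {1..k-1} \<union> {k..k+r}" using k1 by auto
  have ins: "{1..k} = insert k {1..k-1}" using k1 by auto
  show ?thesis
  proof (subst e1, subst e2, intro ext)
    fix s t
    show "(if s \<in> cfgs d ?S \<and> t \<in> cfgs d ?S \<and> (\<forall>i\<in>?S-({1..k}\<union>{k+1..k+r}). s i = t i)
     then prodX d {1..k} X (restr {1..k} s) (restr {1..k} t) * Y (restr {k+1..k+r} s) (restr {k+1..k+r} t) else 0)
      = (if s \<in> cfgs d ?S \<and> t \<in> cfgs d ?S \<and> (\<forall>i\<in>?S-({1..k-1}\<union>{k..k+r}). s i = t i)
     then prodX d {1..k-1} X (restr {1..k-1} s) (restr {1..k-1} t) *
       opmul d {k..k+r} (emb d {k} {k..k+r} (X k)) (emb d {k+1..k+r} {k..k+r} Y) (restr {k..k+r} s) (restr {k..k+r} t) else 0)"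
    proof (cases "s \<in> cfgs d ?S \<and> t \<in> cfgs d ?S")
      case False
      have n1: "\<not> (s \<in> cfgs d ?S \<and> t \<in> cfgs d ?S \<and> (\<forall>i\<in>?S-({1..k}\<union>{k+1..k+r}). s i = t i))" using False by blast
      have n2: "\<not> (s \<in> cfgs d ?S \<and> t \<in> cfgs d ?S \<and> (\<forall>i\<in>?S-({1..k-1}\<union>{k..k+r}). s i = t i))" using False by blast
      show ?thesis by (simp only: n1 n2 if_False)
    next
      case True
      have c: "restr {k..k+r} s \<in> cfgs d {k..k+r}" "restr {k..k+r} t \<in> cfgs d {k..k+r}"
        using True kN k1 by (auto intro!: restr_cfgs)
      have p1: "prodX d {1..k} X (restr {1..k} s) (restr {1..k} t) = (\<Prod>i\<in>{1..k}. X i (restr {i} s) (restr {i} t))"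
        by (rule prodX_restr[where S="{1..N}"]) (use True kN in auto)
      have p2: "prodX d {1..k-1} X (restr {1..k-1} s) (restr {1..k-1} t) = (\<Prod>i\<in>{1..k-1}. X i (restr {i} s) (restr {i} t))"
        by (rule prodX_restr[where S="{1..N}"]) (use True kN in auto)
      have p3: "(\<Prod>i\<in>{1..k}. X i (restr {i} s) (restr {i} t)) = X k (restr {k} s) (restr {k} t) * (\<Prod>i\<in>{1..k-1}. X i (restr {i} s) (restr {i} t))"
        unfolding ins using k1 by (subst prod.insert) auto
      have z: "opmul d {k..k+r} (emb d {k} {k..k+r} (X k)) (emb d {k+1..k+r} {k..k+r} Y) (restr {k..k+r} s) (restr {k..k+r} t)
          = X k (restr {k} s) (restr {k} t) * Y (restr {k+1..k+r} s) (restr {k+1..k+r} t)"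
      proof -
        have "{k..k+r} - ({k} \<union> {k+1..k+r}) = {}" by auto
        then show ?thesis unfolding e3 using c by (simp add: restr_restr, blast)
      qed
      show ?thesis using True p1 p2 p3 z sets by (simp add: mult.assoc mult.left_commute)
    qed
  qed
qed


lemma Yop_pred:
  assumes "1 \<le> k" "k \<le> N - r"
  shows "Yop d N Oh l r X (k-1) = pinv d {k-l..k-1} {k..k+r-1} (Emap d N Oh {k-l..k-1} {k..k+r-1})
     (Emap d N Oh {k-l..k-1} {k..k+r} (opmul d {k..k+r} (emb d {k} {k..k+r} (X k)) (emb d {k+1..k+r} {k..k+r} (Yop d N Oh l r X k))))"
proof -
  have e: "N - r - (k - 1) = Suc (N - r - k)" using assms by simp
  have e2: "N - r - (N - r - k) = k" using assms by simp
  show ?thesis unfolding Yop_def e by (simp only: Yseq.simps Let_def e2)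
qed

lemma Tk_step:
  assumes kl: "l + 1 \<le> k" and kN: "k + r \<le> N"
    and inv: "lr_invertible d N Oh l r"
  shows "Tk d N Oh l r X k = Tk d N Oh l r X (k-1)"
proof -
  let ?S = "{1..N::nat}"
  define Z where "Z = opmul d {k..k+r} (emb d {k} {k..k+r} (X k)) (emb d {k+1..k+r} {k..k+r} (Yop d N Oh l r X k))"
  define P where "P = prodX d {1..k-1} X"
  have k1: "1 \<le> k" using kl by simp
  have IS: "{1..k-1} \<subseteq> ?S" using kN by auto
  have rk0: "Erank d N Oh {(k-1) - l + 1..k-1} {(k-1) + 1..(k-1) + r} = Erank d N Oh {1..k-1} {(k-1) + 1..N}"
  proof -
    have "l \<le> k - 1 \<and> k - 1 \<le> N - r - 1" using kl kN by auto
    then show ?thesis using inv unfolding lr_invertible_def by blast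
  qed
  have s1: "(k-1) - l + 1 = k - l" "(k-1) + 1 = k" "(k-1) + r = k + r - 1" using kl by auto
  have rk: "Erank d N Oh {k-l..k-1} {k..k+r-1} = Erank d N Oh {1..k-1} {k..N}"
    using rk0 unfolding s1 .
  have "Tk d N Oh l r X k = optr d ?S (opmul d ?S (opmul d ?S (emb d {1..k-1} ?S P) (emb d {k..k+r} ?S Z)) Oh)"
    unfolding Tk_def mul_shift[OF k1 kN] Z_def P_def ..
  also have "\<dots> = optr d {1..k-1} (opmul d {1..k-1} (emb d {1..k-1} {1..k-1} P) (Emap d N Oh {1..k-1} {k..k+r} Z))"
    by (rule trace_pair[OF IS])
  also have "\<dots> = optr d {1..k-1} (opmul d {1..k-1} (emb d {1..k-1} {1..k-1} P) (Emap d N Oh {1..k-1} {k..k+r-1} (Yop d N Oh l r X (k-1))))"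
  proof -
    have kNr: "k \<le> N - r" using kN by simp
    have Y': "Yop d N Oh l r X (k-1) = pinv d {k-l..k-1} {k..k+r-1} (Emap d N Oh {k-l..k-1} {k..k+r-1}) (Emap d N Oh {k-l..k-1} {k..k+r} Z)"
      unfolding Z_def by (rule Yop_pred[OF k1 kNr])
    show ?thesis unfolding Y' inv_step[OF kl kN rk, of Z] ..
  qed
  also have "\<dots> = optr d ?S (opmul d ?S (opmul d ?S (emb d {1..k-1} ?S P) (emb d {k..k+r-1} ?S (Yop d N Oh l r X (k-1)))) Oh)"
    by (rule trace_pair[OF IS, symmetric])
  also have "\<dots> = Tk d N Oh l r X (k-1)"
    unfolding Tk_def P_def s1 ..
  finally show ?thesis .
qed

lemma part1:
  assumes l0: "0 < l" and lrN: "l + r \<le> N"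
    and inv: "lr_invertible d N Oh l r"
  shows "optr d {1..N} (opmul d {1..N} (prodX d {1..N} X) Oh) = Tk d N Oh l r X l"
proof -
  let ?S = "{1..N::nat}"
  have split: "?S = {1..N-r} \<union> {N-r+1..N}" using lrN by auto
  have dj: "{1..N-r} \<inter> {N-r+1..N} = {}" by auto
  have top: "optr d ?S (opmul d ?S (prodX d ?S X) Oh) = Tk d N Oh l r X (N - r)"
  proof -
    have "prodX d ?S X = opmul d ?S (emb d {1..N-r} ?S (prodX d {1..N-r} X)) (emb d {N-r+1..N} ?S (prodX d {N-r+1..N} X))"
      using prodX_split[OF dj, of d X] split by simp
    moreover have "Yop d N Oh l r X (N - r) = prodX d {N-r+1..N} X" by (simp add: Yop_def)
    moreover have "N - r + r = N" using lrN by simp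
    ultimately show ?thesis unfolding Tk_def by simp
  qed
  have ind: "j \<le> N - r - l \<Longrightarrow> Tk d N Oh l r X (N - r - j) = Tk d N Oh l r X (N - r)" for j
  proof (induction j)
    case 0 then show ?case by simp
  next
    case (Suc j)
    have "Tk d N Oh l r X (N - r - j) = Tk d N Oh l r X (N - r - j - 1)"
      by (rule Tk_step[OF _ _ inv]) (use Suc.prems lrN in auto)
    then show ?case using Suc by simp
  qed
  have "N - r - (N - r - l) = l" using lrN by simp
  then show ?thesis using ind[of "N - r - l"] top by simp
qed



lemma optr_unit:
  assumes fS: "finite S" and s0: "s0 \<in> cfgs d S" and t0: "t0 \<in> cfgs d S"
  shows "optr d S (opmul d S (\<lambda>s t. if s = s0 \<and> t = t0 then 1 else 0) M) = M t0 s0"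
proof -
  have fc: "finite (cfgs d S)" using fS by (rule finite_cfgs)
  have "optr d S (opmul d S (\<lambda>s t. if s = s0 \<and> t = t0 then 1 else 0) M)
      = (\<Sum>s\<in>cfgs d S. \<Sum>u\<in>cfgs d S. (if s = s0 \<and> u = t0 then 1 else 0) * M u s)"
    by (simp add: optr_def opmul_def)
  also have "\<dots> = (\<Sum>s\<in>cfgs d S. if s = s0 then M t0 s else 0)"
  proof (rule sum.cong[OF refl])
    fix s assume "s \<in> cfgs d S"
    show "(\<Sum>u\<in>cfgs d S. (if s = s0 \<and> u = t0 then 1 else 0) * M u s) = (if s = s0 then M t0 s else 0)"
      by (subst sum_single[OF fc t0]) auto
  qed
  also have "\<dots> = M t0 s0" by (subst sum_single[OF fc s0]) auto
  finally show ?thesis .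
qed

lemma prod_indicator:
  assumes "finite S"
  shows "(\<Prod>i\<in>S. (if P i then 1 else 0 :: complex)) = (if \<forall>i\<in>S. P i then 1 else 0)"
proof (cases "\<forall>i\<in>S. P i")
  case True then show ?thesis by simp
next
  case False
  then obtain i where "i \<in> S" "\<not> P i" by blast
  then show ?thesis using assms False by (subst prod_zero) auto
qed

lemma determine:
  assumes fS: "finite S" and O1: "O1 \<in> opsp d S" and O2: "O2 \<in> opsp d S"
    and H: "\<forall>X. (\<forall>i\<in>S. X i \<in> opsp d {i}) \<longrightarrow>
      optr d S (opmul d S (prodX d S X) O1) = optr d S (opmul d S (prodX d S X) O2)"
  shows "O1 = O2"
proof (intro ext)
  fix a b
  show "O1 a b = O2 a b"
  proof (cases "a \<in> cfgs d S \<and> b \<in> cfgs d S")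
    case False then show ?thesis using O1 O2 by (auto simp: opsp_def)
  next
    case True
    define X where "X i = (\<lambda>x y. if x = restr {i} b \<and> y = restr {i} a then 1 else 0 :: complex)" for i
    have Xop: "\<forall>i\<in>S. X i \<in> opsp d {i}"
    proof
      fix i assume i: "i \<in> S"
      have "restr {i} b \<in> cfgs d {i}" "restr {i} a \<in> cfgs d {i}"
        using True i by (auto intro!: restr_cfgs)
      then show "X i \<in> opsp d {i}" unfolding opsp_def X_def by auto
    qed
    have PX: "prodX d S X = (\<lambda>s t. if s = b \<and> t = a then 1 else 0)"
    proof (intro ext)
      fix s t
      show "prodX d S X s t = (if s = b \<and> t = a then 1 else 0)"
      proof (cases "s \<in> cfgs d S \<and> t \<in> cfgs d S")
        case False then show ?thesis using True by (auto simp: prodX_def)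
      next
        case True2: True
        have "prodX d S X s t = (if \<forall>i\<in>S. restr {i} s = restr {i} b \<and> restr {i} t = restr {i} a then 1 else 0)"
          using True2 fS by (simp add: prodX_def X_def prod_indicator)
        moreover have "(\<forall>i\<in>S. restr {i} s = restr {i} b \<and> restr {i} t = restr {i} a) \<longleftrightarrow> s = b \<and> t = a"
        proof
          assume h: "\<forall>i\<in>S. restr {i} s = restr {i} b \<and> restr {i} t = restr {i} a"
          have "\<forall>i\<in>S. s i = b i \<and> t i = a i"
          proof
            fix i assume "i \<in> S"
            then have "restr {i} s i = restr {i} b i" "restr {i} t i = restr {i} a i" using h by auto
            then show "s i = b i \<and> t i = a i" by (simp add: restr_def)
          qed
          then show "s = b \<and> t = a" using True True2 cfgs_eqI by metis
        qed auto
        ultimately show ?thesis by simp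
      qed
    qed
    have "O1 a b = optr d S (opmul d S (prodX d S X) O1)" using optr_unit[OF fS, of b d a O1] True PX by simp
    also have "\<dots> = optr d S (opmul d S (prodX d S X) O2)" using H Xop by blast
    also have "\<dots> = O2 a b" using optr_unit[OF fS, of b d a O2] True PX by simp
    finally show ?thesis .
  qed
qed



lemma Emap_block:
  fixes k0 N l r :: nat
  assumes k0: "1 \<le> k0" "k0 + (l + r + 1) - 1 \<le> N"
    and IB: "I \<subseteq> {k0..k0 + (l + r + 1) - 1}" and JB: "J \<subseteq> {k0..k0 + (l + r + 1) - 1}"
    and eq: "ptr d {1..N} ({1..N} - {k0..k0 + (l + r + 1) - 1}) O2 = ptr d {1..N} ({1..N} - {k0..k0 + (l + r + 1) - 1}) O1"
  shows "Emap d N O1 I J = Emap d N O2 I J"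
proof (intro ext)
  fix X s t
  have BS: "{k0..k0 + (l + r + 1) - 1} \<subseteq> {1..N}" using k0 by auto
  show "Emap d N O1 I J X s t = Emap d N O2 I J X s t"
    using Emap_local[OF IB JB BS, of d O1 X] Emap_local[OF IB JB BS, of d O2 X] eq by simp
qed

lemma Yseq_local:
  fixes N l r :: nat
  assumes l0: "0 < l" and lrN: "l + r + 1 \<le> N"
    and blocks: "\<forall>k\<in>{1..N - (l + r + 1) + 1}. ptr d {1..N} ({1..N} - {k..k + (l + r + 1) - 1}) O2
                   = ptr d {1..N} ({1..N} - {k..k + (l + r + 1) - 1}) O1"
  shows "j \<le> N - r - l \<Longrightarrow> Yseq d N O1 l r X j = Yseq d N O2 l r X j"
proof (induction j)
  case 0 then show ?case by simp
next
  case (Suc j)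
  define k where "k = N - r - j"
  have kl: "l + 1 \<le> k" and kN: "k + r \<le> N" using Suc.prems lrN by (auto simp: k_def)
  define k0 where "k0 = k - l"
  have k0: "1 \<le> k0" "k0 + (l + r + 1) - 1 \<le> N" using kl kN by (auto simp: k0_def)
  have Bk: "k0 + (l + r + 1) - 1 = k + r" using kl by (simp add: k0_def)
  have kb: "k0 \<in> {1..N - (l + r + 1) + 1}" using k0 by auto
  have eq: "ptr d {1..N} ({1..N} - {k0..k0 + (l + r + 1) - 1}) O2 = ptr d {1..N} ({1..N} - {k0..k0 + (l + r + 1) - 1}) O1"
    using blocks kb by blast
  have IB: "{k-l..k-1} \<subseteq> {k0..k0 + (l + r + 1) - 1}" unfolding Bk using kl by (auto simp: k0_def)
  have J1B: "{k..k+r-1} \<subseteq> {k0..k0 + (l + r + 1) - 1}" unfolding Bk by (auto simp: k0_def)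
  have J0B: "{k..k+r} \<subseteq> {k0..k0 + (l + r + 1) - 1}" unfolding Bk by (auto simp: k0_def)
  have E1: "Emap d N O1 {k-l..k-1} {k..k+r-1} = Emap d N O2 {k-l..k-1} {k..k+r-1}"
    by (rule Emap_block[OF k0 IB J1B eq])
  have E0: "Emap d N O1 {k-l..k-1} {k..k+r} = Emap d N O2 {k-l..k-1} {k..k+r}"
    by (rule Emap_block[OF k0 IB J0B eq])
  have IH: "Yseq d N O1 l r X j = Yseq d N O2 l r X j" using Suc by simp
  show ?case unfolding Yseq.simps Let_def k_def[symmetric] E1 E0 IH ..
qed

lemma Tk_local:
  fixes N l r :: nat
  assumes l0: "0 < l" and lrN: "l + r + 1 \<le> N"
    and blocks: "\<forall>k\<in>{1..N - (l + r + 1) + 1}. ptr d {1..N} ({1..N} - {k..k + (l + r + 1) - 1}) O2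
                   = ptr d {1..N} ({1..N} - {k..k + (l + r + 1) - 1}) O1"
  shows "Tk d N O1 l r X l = Tk d N O2 l r X l"
proof -
  have IS: "{1..l} \<subseteq> {1..N}" using lrN by auto
  have Y: "Yop d N O1 l r X l = Yop d N O2 l r X l"
    unfolding Yop_def by (rule Yseq_local[OF l0 lrN blocks]) simp
  have k0: "1 \<le> (1::nat)" "1 + (l + r + 1) - 1 \<le> N" using lrN by auto
  have kb: "(1::nat) \<in> {1..N - (l + r + 1) + 1}" using lrN by auto
  have eq: "ptr d {1..N} ({1..N} - {1..1 + (l + r + 1) - 1}) O2 = ptr d {1..N} ({1..N} - {1..1 + (l + r + 1) - 1}) O1"
    using blocks kb by blast
  have IB: "{1..l} \<subseteq> {1..1 + (l + r + 1) - 1}" by auto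
  have JB: "{l+1..l+r} \<subseteq> {1..1 + (l + r + 1) - 1}" by auto
  have E: "Emap d N O1 {1..l} {l+1..l+r} = Emap d N O2 {1..l} {l+1..l+r}"
    by (rule Emap_block[OF k0 IB JB eq])
  show ?thesis unfolding Tk_def trace_pair[OF IS] E Y ..
qed

theorem theorem1:
  fixes d N l r :: nat and Oh :: op and X :: "nat \<Rightarrow> op"
  assumes "N \<ge> 4" and "l > 0" and "r > 0" and "2 \<le> l + r" and "l + r \<le> N - 2"
    and "Oh \<in> opsp d {1..N}"
    and "lr_invertible d N Oh l r"
    and "\<forall>i\<in>{1..N}. X i \<in> opsp d {i}"
  shows "optr d {1..N} (opmul d {1..N} (prodX d {1..N} X) Oh)
         = optr d {1..N}
             (opmul d {1..N}
                (opmul d {1..N} (emb d {1..l} {1..N} (prodX d {1..l} X))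
                                (emb d {l + 1..l + r} {1..N} (Yop d N Oh l r X l)))
                Oh)
         \<and> (\<forall>Oh'. Oh' \<in> opsp d {1..N} \<and> lr_invertible d N Oh' l r \<and>
           (\<forall>k\<in>{1..N - (l + r + 1) + 1}.
              ptr d {1..N} ({1..N} - {k..k + (l + r + 1) - 1}) Oh'
              = ptr d {1..N} ({1..N} - {k..k + (l + r + 1) - 1}) Oh)
           \<longrightarrow> Oh' = Oh)"
proof
  have lrN: "l + r \<le> N" "l + r + 1 \<le> N" using assms(1,5) by auto
  show "optr d {1..N} (opmul d {1..N} (prodX d {1..N} X) Oh)
         = optr d {1..N}
             (opmul d {1..N}
                (opmul d {1..N} (emb d {1..l} {1..N} (prodX d {1..l} X))
                                (emb d {l + 1..l + r} {1..N} (Yop d N Oh l r X l)))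
                Oh)"
    using part1[OF assms(2) lrN(1) assms(7), of X] unfolding Tk_def .
  show "\<forall>Oh'. Oh' \<in> opsp d {1..N} \<and> lr_invertible d N Oh' l r \<and>
           (\<forall>k\<in>{1..N - (l + r + 1) + 1}.
              ptr d {1..N} ({1..N} - {k..k + (l + r + 1) - 1}) Oh'
              = ptr d {1..N} ({1..N} - {k..k + (l + r + 1) - 1}) Oh)
           \<longrightarrow> Oh' = Oh"
  proof (intro allI impI)
    fix Oh' assume h: "Oh' \<in> opsp d {1..N} \<and> lr_invertible d N Oh' l r \<and>
           (\<forall>k\<in>{1..N - (l + r + 1) + 1}.
              ptr d {1..N} ({1..N} - {k..k + (l + r + 1) - 1}) Oh'
              = ptr d {1..N} ({1..N} - {k..k + (l + r + 1) - 1}) Oh)"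
    have hOp: "Oh' \<in> opsp d {1..N}" using h by blast
    have hinv: "lr_invertible d N Oh' l r" using h by blast
    have blk: "\<forall>k\<in>{1..N - (l + r + 1) + 1}.
              ptr d {1..N} ({1..N} - {k..k + (l + r + 1) - 1}) Oh'
              = ptr d {1..N} ({1..N} - {k..k + (l + r + 1) - 1}) Oh" using h by blast
    have H: "\<forall>Y. (\<forall>i\<in>{1..N}. Y i \<in> opsp d {i}) \<longrightarrow>
      optr d {1..N} (opmul d {1..N} (prodX d {1..N} Y) Oh') = optr d {1..N} (opmul d {1..N} (prodX d {1..N} Y) Oh)"
    proof (intro allI impI)
      fix Y
      have "optr d {1..N} (opmul d {1..N} (prodX d {1..N} Y) Oh') = Tk d N Oh' l r Y l"
        by (rule part1[OF assms(2) lrN(1) hinv])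
      also have "Tk d N Oh l r Y l = Tk d N Oh' l r Y l"
        by (rule Tk_local[OF assms(2) lrN(2) blk])
      then have "Tk d N Oh' l r Y l = Tk d N Oh l r Y l" by (rule sym)
      also have "Tk d N Oh l r Y l = optr d {1..N} (opmul d {1..N} (prodX d {1..N} Y) Oh)"
        by (rule part1[OF assms(2) lrN(1) assms(7), symmetric])
      finally show "optr d {1..N} (opmul d {1..N} (prodX d {1..N} Y) Oh') = optr d {1..N} (opmul d {1..N} (prodX d {1..N} Y) Oh)" .
    qed
    show "Oh' = Oh" by (rule determine[OF finite_atLeastAtMost hOp assms(6) H])
  qed
qed


end
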